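(* Let $L$ be an $n\times n$ nonsingular M-matrix with integer entries, and let $\phi_1,\dots,\phi_n:\mathbb{R}\to\mathbb{R}$ be non-negative strictly increasing functions. Define $E_\phi(q)=\sum_{i=1}^n\phi_i((L^{-1}q)_i)$ for $q\in\mathbb{Z}^n$. A vector $f\in\mathbb{Z}^n$ with $f\ge0$ is $z$-superstable with respect to $L$ if and only if $f$ is the minimizer of $\min_{g\sim f,\ g\ge0}E_\phi(g)$ (over $g\in\mathbb{Z}^n$).
   Context: A Z-matrix is a square real matrix whose off-diagonal entries are all $\le 0$. A nonsingular M-matrix is a Z-matrix $L$ that is invertible with $L^{-1}$ having all entries nonnegative. Vector inequalities are entrywise. For $f,g\in\mathbb{Z}^n$, $f\sim g$ means $g-f=Lz$ for some $z\in\mathbb{Z}^n$. A vector $f\in\mathbb{Z}^n$ with $f\ge0$ is $z$-superstable with respect to $L$ if for every $z\in\mathbb{Z}^n$ with $z\ge0$ and $z\ne0$ there exists $i$ with $f_i-(Lz)_i<0$. *)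

theory Defs
  imports "HOL-Analysis.Analysis"
begin

definition of_int_mat :: "int^'n^'m \<Rightarrow> real^'n^'m" where
  "of_int_mat L = (\<chi> i j. real_of_int (L $ i $ j))"

definition of_int_vec :: "int^'n \<Rightarrow> real^'n" where
  "of_int_vec q = (\<chi> i. real_of_int (q $ i))"

definition z_matrix :: "real^'n^'n \<Rightarrow> bool" where
  "z_matrix L \<longleftrightarrow> (\<forall>i j. i \<noteq> j \<longrightarrow> L $ i $ j \<le> 0)"

definition nonsingular_M_matrix :: "real^'n^'n \<Rightarrow> bool" where
  "nonsingular_M_matrix L \<longleftrightarrow>
     z_matrix L \<and> invertible L \<and> (\<forall>i j. matrix_inv L $ i $ j \<ge> 0)"

definition lequiv :: "int^'n^'n \<Rightarrow> int^'n \<Rightarrow> int^'n \<Rightarrow> bool" where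
  "lequiv L f g \<longleftrightarrow> (\<exists>z::int^'n. g - f = L *v z)"

definition nonneg_vec :: "int^'n \<Rightarrow> bool" where
  "nonneg_vec f \<longleftrightarrow> (\<forall>i. f $ i \<ge> 0)"

definition z_superstable :: "int^'n^'n \<Rightarrow> int^'n \<Rightarrow> bool" where
  "z_superstable L f \<longleftrightarrow> nonneg_vec f \<and>
     (\<forall>z::int^'n. nonneg_vec z \<and> z \<noteq> 0 \<longrightarrow> (\<exists>i. f $ i - (L *v z) $ i < 0))"

definition E_phi :: "int^'n^'n \<Rightarrow> ('n \<Rightarrow> real \<Rightarrow> real) \<Rightarrow> int^'n \<Rightarrow> real" where
  "E_phi L \<phi> q = (\<Sum>i\<in>UNIV. \<phi> i ((matrix_inv (of_int_mat L) *v of_int_vec q) $ i))"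

end

theory Submission
  imports Defs
begin

lemma ofv_add: "of_int_vec (a + b) = of_int_vec a + of_int_vec b"
  by (simp add: of_int_vec_def vec_eq_iff)

lemma ofv_mult: "of_int_vec (L *v z) = of_int_mat L *v of_int_vec z"
  by (simp add: of_int_vec_def of_int_mat_def vec_eq_iff matrix_vector_mult_def)

lemma minv_left: "invertible (A::real^'n^'n) \<Longrightarrow> matrix_inv A ** A = mat 1"
  unfolding invertible_def matrix_inv_def by (rule someI2_ex) auto

lemma key:
  fixes L :: "int^'n^'n"
  assumes "invertible (of_int_mat L)"
  shows "matrix_inv (of_int_mat L) *v of_int_vec (f + L *v z)
       = matrix_inv (of_int_mat L) *v of_int_vec f + of_int_vec z"
proof -
  have "matrix_inv (of_int_mat L) *v (of_int_mat L *v of_int_vec z) = of_int_vec z"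
    using assms by (simp add: matrix_vector_mul_assoc minv_left[OF assms])
  then show ?thesis
    by (simp add: ofv_add ofv_mult matrix_vector_right_distrib)
qed

lemma Ekey:
  fixes L :: "int^'n^'n"
  assumes "invertible (of_int_mat L)"
  shows "E_phi L \<phi> (f + L *v z) =
     (\<Sum>i\<in>UNIV. \<phi> i ((matrix_inv (of_int_mat L) *v of_int_vec f) $ i + real_of_int (z $ i)))"
  unfolding E_phi_def key[OF assms] by (simp add: of_int_vec_def)

theorem mainTheorem15:
  fixes L :: "int^'n^'n" and \<phi> :: "'n \<Rightarrow> real \<Rightarrow> real" and f :: "int^'n"
  assumes "nonsingular_M_matrix (of_int_mat L)"
    and "\<And>i x. \<phi> i x \<ge> 0"
    and "\<And>i. strict_mono (\<phi> i)"
    and "nonneg_vec f"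
  shows "z_superstable L f \<longleftrightarrow>
         (\<forall>g. lequiv L f g \<and> nonneg_vec g \<and> g \<noteq> f \<longrightarrow> E_phi L \<phi> f < E_phi L \<phi> g)"
proof -
  have inv: "invertible (of_int_mat L)" using assms(1) by (simp add: nonsingular_M_matrix_def)
  have Z: "\<And>i j. i \<noteq> j \<Longrightarrow> L $ i $ j \<le> 0"
    using assms(1) by (simp add: nonsingular_M_matrix_def z_matrix_def of_int_mat_def)
  define x where "x = matrix_inv (of_int_mat L) *v of_int_vec f"
  have Ef: "E_phi L \<phi> f = (\<Sum>i\<in>UNIV. \<phi> i (x $ i + real_of_int ((0::int^'n) $ i)))"
    using Ekey[OF inv, of \<phi> f 0] by (simp add: x_def)
  have Eg: "\<And>z. E_phi L \<phi> (f + L *v z) = (\<Sum>i\<in>UNIV. \<phi> i (x $ i + real_of_int (z $ i)))"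
    using Ekey[OF inv] by (simp add: x_def)
  have mv: "\<And>w i. (L *v w) $ i = (\<Sum>j\<in>UNIV. L $ i $ j * w $ j)"
    by (simp add: matrix_vector_mult_def)
  show ?thesis
  proof
    assume ss: "z_superstable L f"
    show "\<forall>g. lequiv L f g \<and> nonneg_vec g \<and> g \<noteq> f \<longrightarrow> E_phi L \<phi> f < E_phi L \<phi> g"
    proof (intro allI impI)
      fix g assume h: "lequiv L f g \<and> nonneg_vec g \<and> g \<noteq> f"
      then obtain z where hz: "g - f = L *v z" by (auto simp: lequiv_def)
      have g: "g = f + L *v z" using hz by (metis add.commute diff_add_cancel)
      define zp where "zp = (\<chi> i. max 0 (z $ i))"
      define zn where "zn = (\<chi> i. max 0 (- z $ i))"
      have zsplit: "z = zp - zn" by (simp add: zp_def zn_def vec_eq_iff) linarith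
      have zn_nn: "nonneg_vec zn" by (simp add: nonneg_vec_def zn_def)
      have Lz: "(L *v z) $ i = (L *v zp) $ i - (L *v zn) $ i" for i
        unfolding mv zsplit by (simp add: right_diff_distrib sum_subtractf)
      have nonneg: "f $ i - (L *v zn) $ i \<ge> 0" for i
      proof (cases "z $ i \<ge> 0")
        case True
        have "(L *v zn) $ i \<le> 0" unfolding mv
        proof (rule sum_nonpos)
          fix j
          show "L $ i $ j * zn $ j \<le> 0"
          proof (cases "j = i")
            case True thus ?thesis using \<open>z $ i \<ge> 0\<close> by (simp add: zn_def)
          next
            case False thus ?thesis using Z[of i j] zn_nn
              by (simp add: nonneg_vec_def mult_nonpos_nonneg)
          qed
        qed
        then show ?thesis using assms(4) by (simp add: nonneg_vec_def) (smt (verit) assms(4) nonneg_vec_def)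
      next
        case False
        have "(L *v zp) $ i \<le> 0" unfolding mv
        proof (rule sum_nonpos)
          fix j
          show "L $ i $ j * zp $ j \<le> 0"
          proof (cases "j = i")
            case True thus ?thesis using \<open>\<not> z $ i \<ge> 0\<close> by (simp add: zp_def)
          next
            case False thus ?thesis using Z[of i j]
              by (simp add: zp_def mult_nonpos_nonneg)
          qed
        qed
        moreover have "g $ i \<ge> 0" using h by (simp add: nonneg_vec_def)
        ultimately show ?thesis using g Lz[of i] by simp
      qed
      have "zn = 0"
      proof (rule ccontr)
        assume "zn \<noteq> 0"
        then obtain i where "f $ i - (L *v zn) $ i < 0" using ss zn_nn by (auto simp: z_superstable_def)
        thus False using nonneg[of i] by simp
      qed
      hence zpos: "\<And>i. z $ i \<ge> 0" using zsplit by (simp add: zp_def vec_eq_iff) (metis max.cobounded1)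
      have "z \<noteq> 0" using h g by auto
      then obtain k where k: "z $ k \<noteq> 0" by (auto simp: vec_eq_iff)
      have "(\<Sum>i\<in>UNIV. \<phi> i (x $ i + real_of_int ((0::int^'n) $ i)))
          < (\<Sum>i\<in>UNIV. \<phi> i (x $ i + real_of_int (z $ i)))"
      proof (rule sum_strict_mono_ex1)
        show "\<forall>i\<in>UNIV. \<phi> i (x $ i + real_of_int ((0::int^'n) $ i)) \<le> \<phi> i (x $ i + real_of_int (z $ i))"
          using zpos assms(3) by (simp add: strict_mono_less_eq)
        have "z $ k > 0" using zpos[of k] k by simp
        thus "\<exists>i\<in>UNIV. \<phi> i (x $ i + real_of_int ((0::int^'n) $ i)) < \<phi> i (x $ i + real_of_int (z $ i))"
          using assms(3) by (auto simp: strict_mono_less intro!: bexI[of _ k])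
      qed simp
      thus "E_phi L \<phi> f < E_phi L \<phi> g" using Ef Eg[of z] g by simp
    qed
  next
    assume min: "\<forall>g. lequiv L f g \<and> nonneg_vec g \<and> g \<noteq> f \<longrightarrow> E_phi L \<phi> f < E_phi L \<phi> g"
    show "z_superstable L f"
      unfolding z_superstable_def
    proof (intro conjI allI impI)
      show "nonneg_vec f" by fact
      fix z :: "int^'n" assume hz: "nonneg_vec z \<and> z \<noteq> 0"
      show "\<exists>i. f $ i - (L *v z) $ i < 0"
      proof (rule ccontr)
        assume "\<not> ?thesis"
        hence ge: "\<And>i. f $ i - (L *v z) $ i \<ge> 0" by (meson not_le)
        define g where "g = f + L *v (- z)"
        have neg: "(L *v (- z)) $ i = - (L *v z) $ i" for i
          unfolding mv by (simp add: sum_negf)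
        have l: "lequiv L f g" unfolding lequiv_def g_def by auto
        have n: "nonneg_vec g" using ge neg by (simp add: nonneg_vec_def g_def)
        have "g \<noteq> f"
        proof
          assume "g = f"
          hence "matrix_inv (of_int_mat L) *v of_int_vec f + of_int_vec (- z) =
                 matrix_inv (of_int_mat L) *v of_int_vec f"
            using key[OF inv, of f "-z"] by (simp add: g_def)
          hence "of_int_vec (- z) = 0" by simp
          hence "z = 0" by (simp add: of_int_vec_def vec_eq_iff)
          thus False using hz by simp
        qed
        hence lt: "E_phi L \<phi> f < E_phi L \<phi> g" using min l n by blast
        have "(\<Sum>i\<in>UNIV. \<phi> i (x $ i + real_of_int ((- z) $ i)))
            \<le> (\<Sum>i\<in>UNIV. \<phi> i (x $ i + real_of_int ((0::int^'n) $ i)))"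
        proof (rule sum_mono)
          fix i
          have "z $ i \<ge> 0" using hz by (simp add: nonneg_vec_def)
          thus "\<phi> i (x $ i + real_of_int ((- z) $ i)) \<le> \<phi> i (x $ i + real_of_int ((0::int^'n) $ i))"
            using assms(3) by (simp add: strict_mono_less_eq)
        qed
        thus False using lt Ef Eg[of "-z"] g_def by simp
      qed
    qed
  qed
qed

end
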